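(* Let $G$ be a graph on $n$ vertices and let $\mathcal{C}$ be a clique geometry in $G$ such that every vertex belongs to at least $r\ge 2$ and at most $R$ members of $\mathcal{C}$, and every member of $\mathcal{C}$ has order at least $\ell$. Then \[ \ell \le \frac{R}{\sqrt{r(r-1)}}\sqrt{n}. \]
   Context: The order of a clique is its number of vertices. A collection $\mathcal{C}$ of cliques of a graph is a clique geometry if (i) every clique in $\mathcal{C}$ is a maximal clique and (ii) every pair of adjacent vertices belongs to exactly one member of $\mathcal{C}$. *)

theory Defs
  imports Complex_Main
begin

definition simple_graph :: "'a set \<Rightarrow> ('a \<Rightarrow> 'a \<Rightarrow> bool) \<Rightarrow> bool" where
  "simple_graph V E \<longleftrightarrow> finite V \<and> (\<forall>x y. E x y \<longrightarrow> x \<in> V \<and> y \<in> V)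
     \<and> (\<forall>x y. E x y \<longrightarrow> E y x) \<and> (\<forall>x. \<not> E x x)"

definition is_clique :: "'a set \<Rightarrow> ('a \<Rightarrow> 'a \<Rightarrow> bool) \<Rightarrow> 'a set \<Rightarrow> bool" where
  "is_clique V E K \<longleftrightarrow> K \<subseteq> V \<and> (\<forall>x\<in>K. \<forall>y\<in>K. x \<noteq> y \<longrightarrow> E x y)"

definition maximal_clique :: "'a set \<Rightarrow> ('a \<Rightarrow> 'a \<Rightarrow> bool) \<Rightarrow> 'a set \<Rightarrow> bool" where
  "maximal_clique V E K \<longleftrightarrow> is_clique V E K \<and>
     (\<forall>K'. is_clique V E K' \<and> K \<subseteq> K' \<longrightarrow> K' = K)"

definition clique_geometry :: "'a set \<Rightarrow> ('a \<Rightarrow> 'a \<Rightarrow> bool) \<Rightarrow> 'a set set \<Rightarrow> bool" where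
  "clique_geometry V E \<C> \<longleftrightarrow> (\<forall>K\<in>\<C>. maximal_clique V E K) \<and>
     (\<forall>x y. E x y \<longrightarrow> (\<exists>!K. K \<in> \<C> \<and> x \<in> K \<and> y \<in> K))"

end

theory Submission
  imports Defs
begin

lemma card_filter_sum:
  assumes "finite A"
  shows "card {y \<in> A. P y} = (\<Sum>y\<in>A. if P y then 1 else (0::nat))"
proof -
  have "card {y \<in> A. P y} = (\<Sum>y\<in>{y \<in> A. P y}. (1::nat))" by (rule card_eq_sum)
  also have "\<dots> = (\<Sum>y\<in>A. if P y then 1 else (0::nat))" by (rule sum.inter_filter[OF assms])
  finally show ?thesis .
qed

lemma final_ineq:
  fixes l r R n :: real
  assumes "r \<ge> 2" "R \<ge> r" "l \<ge> 0" "n \<ge> 0"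
    and h: "l * (r - 1) * (l - 1) \<le> R * (n - l)"
  shows "l \<le> R / sqrt (r * (r - 1)) * sqrt n"
proof -
  have rr: "r * (r - 1) > 0" using assms by simp
  have R0: "R \<ge> 0" using assms by linarith
  have "R * (l * (r - 1) * (l - 1)) \<le> R * (R * (n - l))"
    using h R0 by (rule mult_left_mono)
  hence a: "R * R * n \<ge> R * l * l * (r - 1) + R * l * (R - r + 1)"
    by (simp add: algebra_simps)
  have b: "R * l * l * (r - 1) \<ge> r * l * l * (r - 1)"
    using assms by (intro mult_right_mono) auto
  have c: "R * l * (R - r + 1) \<ge> 0" using assms by simp
  have k0: "l * l * (r * (r - 1)) \<le> R * R * n"
    using a b c by (simp add: algebra_simps)
  have key: "(l * sqrt (r * (r - 1)))^2 \<le> (R * sqrt n)^2"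
  proof -
    have "(l * sqrt (r * (r - 1)))^2 = l * l * (r * (r - 1))"
      using rr by (simp add: power_mult_distrib power2_eq_square)
    moreover have "(R * sqrt n)^2 = R * R * n"
      using assms by (simp add: power_mult_distrib power2_eq_square)
    ultimately show ?thesis using k0 by simp
  qed
  have "l * sqrt (r * (r - 1)) \<le> R * sqrt n"
    using power2_le_imp_le[OF key] R0 assms by simp
  thus ?thesis using rr by (simp add: field_simps)
qed

theorem lemma10:
  fixes V :: "'a set" and E :: "'a \<Rightarrow> 'a \<Rightarrow> bool" and \<C> :: "'a set set"
    and n r R l :: nat
  assumes "simple_graph V E"
    and "V \<noteq> {}"
    and "card V = n"
    and "clique_geometry V E \<C>"
    and "r \<ge> 2"
    and "\<forall>v\<in>V. r \<le> card {K \<in> \<C>. v \<in> K} \<and> card {K \<in> \<C>. v \<in> K} \<le> R"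
    and "\<forall>K\<in>\<C>. l \<le> card K"
  shows "real l \<le> real R / sqrt (real r * (real r - 1)) * sqrt (real n)"
proof -
  note sg = assms(1)[unfolded simple_graph_def]
  have finV: "finite V" using sg by blast
  have mc: "\<And>K. K \<in> \<C> \<Longrightarrow> maximal_clique V E K"
    using assms(4) unfolding clique_geometry_def by blast
  have cl: "\<And>K. K \<in> \<C> \<Longrightarrow> is_clique V E K"
    using mc unfolding maximal_clique_def by blast
  have sub: "\<And>K. K \<in> \<C> \<Longrightarrow> K \<subseteq> V" using cl[unfolded is_clique_def] by blast
  have adj: "\<And>K x y. K \<in> \<C> \<Longrightarrow> x \<in> K \<Longrightarrow> y \<in> K \<Longrightarrow> x \<noteq> y \<Longrightarrow> E x y"
    using cl[unfolded is_clique_def] by blast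
  have eu: "\<And>x y. E x y \<Longrightarrow> \<exists>!K. K \<in> \<C> \<and> x \<in> K \<and> y \<in> K"
    using assms(4) unfolding clique_geometry_def by blast
  have uniq: "K = K'" if "E x y" "K \<in> \<C>" "K' \<in> \<C>" "x \<in> K" "y \<in> K" "x \<in> K'" "y \<in> K'" for K K' x y
    using eu[OF that(1)] that(2-7) by (metis (no_types, lifting))
  obtain v where v: "v \<in> V" using assms(2) by blast
  have cv: "r \<le> card {K \<in> \<C>. v \<in> K}" "card {K \<in> \<C>. v \<in> K} \<le> R" using assms(6) v by auto
  hence "card {K \<in> \<C>. v \<in> K} \<noteq> 0" using assms(5) by linarith
  hence "{K \<in> \<C>. v \<in> K} \<noteq> {}" by (metis card.empty)
  then obtain K where K: "K \<in> \<C>" by blast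
  have RR: "r \<le> R" using cv by linarith
  have finK: "finite K" by (rule finite_subset[OF sub[OF K] finV])
  define Cx where "Cx x = {K' \<in> \<C>. x \<in> K'}" for x
  have low: "(r - 1) * (l - 1) \<le> card {y \<in> V - K. E x y}" if x: "x \<in> K" for x
  proof -
    have xV: "x \<in> V" using sub[OF K] x by blast
    have cx: "r \<le> card (Cx x)" using assms(6) xV unfolding Cx_def by blast
    hence "card (Cx x) \<noteq> 0" using assms(5) by linarith
    hence finCx: "finite (Cx x)" by (meson card.infinite)
    have KC: "K \<in> Cx x" using K x unfolding Cx_def by blast
    have c1: "r - 1 \<le> card (Cx x - {K})" using cx KC finCx by (simp add: card_Diff_singleton)
    have fin2: "finite (K' - {x})" if "K' \<in> Cx x - {K}" for K'
    proof -
      have "K' \<in> \<C>" using that unfolding Cx_def by blast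
      hence "K' \<subseteq> V" by (rule sub)
      hence "finite K'" by (rule finite_subset) (rule finV)
      thus ?thesis by simp
    qed
    have disj: "\<forall>A\<in>Cx x - {K}. \<forall>B\<in>Cx x - {K}. A \<noteq> B \<longrightarrow> (A - {x}) \<inter> (B - {x}) = {}"
    proof (intro ballI impI)
      fix A B assume A: "A \<in> Cx x - {K}" and B: "B \<in> Cx x - {K}" and AB: "A \<noteq> B"
      have A': "A \<in> \<C>" "x \<in> A" using A unfolding Cx_def by blast+
      have B': "B \<in> \<C>" "x \<in> B" using B unfolding Cx_def by blast+
      show "(A - {x}) \<inter> (B - {x}) = {}"
      proof (rule ccontr)
        assume "(A - {x}) \<inter> (B - {x}) \<noteq> {}"
        then obtain y where y: "y \<in> A" "y \<in> B" "y \<noteq> x" by blast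
        have "E x y" using adj[OF A'(1) A'(2) y(1)] y(3) by blast
        hence "A = B" using uniq A' B' y(1,2) by blast
        thus False using AB by blast
      qed
    qed
    have "(r - 1) * (l - 1) \<le> card (Cx x - {K}) * (l - 1)" using c1 by (rule mult_le_mono1)
    also have "\<dots> = (\<Sum>K'\<in>Cx x - {K}. (l - 1))" by simp
    also have "\<dots> \<le> (\<Sum>K'\<in>Cx x - {K}. card (K' - {x}))"
    proof (rule sum_mono)
      fix K' assume K'C: "K' \<in> Cx x - {K}"
      have "K' \<in> \<C>" "x \<in> K'" using K'C unfolding Cx_def by blast+
      hence "l \<le> card K'" using assms(7) by blast
      moreover have "card (K' - {x}) = card K' - 1" using \<open>x \<in> K'\<close> by (simp add: card_Diff_singleton)
      ultimately show "l - 1 \<le> card (K' - {x})" by linarith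
    qed
    also have "\<dots> = card (\<Union>K'\<in>Cx x - {K}. K' - {x})"
    proof -
      have "finite (Cx x - {K})" using finCx by simp
      moreover have "\<forall>K'\<in>Cx x - {K}. finite (K' - {x})" using fin2 by blast
      ultimately show ?thesis using card_UN_disjoint[of "Cx x - {K}" "\<lambda>K'. K' - {x}"] disj by simp
    qed
    also have "\<dots> \<le> card {y \<in> V - K. E x y}"
    proof (rule card_mono)
      show "finite {y \<in> V - K. E x y}" using finV by simp
      show "(\<Union>K'\<in>Cx x - {K}. K' - {x}) \<subseteq> {y \<in> V - K. E x y}"
      proof
        fix y assume "y \<in> (\<Union>K'\<in>Cx x - {K}. K' - {x})"
        then obtain K' where K'1: "K' \<in> Cx x - {K}" and K'2: "y \<in> K'" "y \<noteq> x" by blast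
        have K': "K' \<in> \<C>" "x \<in> K'" "K' \<noteq> K" using K'1 unfolding Cx_def by blast+
        have e: "E x y" using adj[OF K'(1) K'(2) K'2(1)] K'2(2) by blast
        have "y \<notin> K"
        proof
          assume "y \<in> K"
          hence "K = K'" using uniq[OF e K K'(1) x] K'(2) K'2(1) by blast
          thus False using K'(3) by blast
        qed
        moreover have "y \<in> V" using sub[OF K'(1)] K'2(1) by blast
        ultimately show "y \<in> {y \<in> V - K. E x y}" using e by blast
      qed
    qed
    finally show ?thesis .
  qed
  have up: "card {x \<in> K. E x y} \<le> R" if y: "y \<in> V - K" for y
  proof -
    define f where "f x = (SOME K'. K' \<in> \<C> \<and> x \<in> K' \<and> y \<in> K')" for x
    have fx: "f x \<in> \<C> \<and> x \<in> f x \<and> y \<in> f x" if "x \<in> {x \<in> K. E x y}" for x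
    proof -
      have "E x y" using that by blast
      hence "\<exists>K'. K' \<in> \<C> \<and> x \<in> K' \<and> y \<in> K'" using eu by blast
      thus ?thesis unfolding f_def by (rule someI_ex)
    qed
    have inj: "inj_on f {x \<in> K. E x y}"
    proof (rule inj_onI)
      fix a b assume a: "a \<in> {x \<in> K. E x y}" and b: "b \<in> {x \<in> K. E x y}" and fab: "f a = f b"
      show "a = b"
      proof (rule ccontr)
        assume ne: "a \<noteq> b"
        have aK: "a \<in> K" and bK: "b \<in> K" using a b by blast+
        have eab: "E a b" using adj[OF K aK bK] ne by blast
        have fa: "f a \<in> \<C>" "a \<in> f a" "y \<in> f a" using fx[OF a] by blast+
        have fb: "b \<in> f a" using fx[OF b] fab by simp
        have "K = f a" using uniq[OF eab K fa(1) aK bK fa(2) fb] .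
        thus False using fa(3) y by blast
      qed
    qed
    have img: "f ` {x \<in> K. E x y} \<subseteq> Cx y"
    proof
      fix z assume "z \<in> f ` {x \<in> K. E x y}"
      then obtain x where x: "x \<in> {x \<in> K. E x y}" "z = f x" by blast
      show "z \<in> Cx y" using fx[OF x(1)] x(2) unfolding Cx_def by blast
    qed
    have yV: "y \<in> V" using y by blast
    have cy: "card (Cx y) \<le> R" "r \<le> card (Cx y)" using assms(6) yV unfolding Cx_def by blast+
    hence "card (Cx y) \<noteq> 0" using assms(5) by linarith
    hence finCy: "finite (Cx y)" by (meson card.infinite)
    have "card {x \<in> K. E x y} = card (f ` {x \<in> K. E x y})" using inj by (simp add: card_image)
    also have "\<dots> \<le> card (Cx y)" using card_mono[OF finCy img] .
    finally show ?thesis using cy(1) by linarith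
  qed
  have finVK: "finite (V - K)" using finV by simp
  have "card K * ((r - 1) * (l - 1)) = (\<Sum>x\<in>K. (r - 1) * (l - 1))" by simp
  also have "\<dots> \<le> (\<Sum>x\<in>K. card {y \<in> V - K. E x y})" using low by (rule sum_mono)
  also have "\<dots> = (\<Sum>x\<in>K. \<Sum>y\<in>V - K. if E x y then 1 else 0)"
    by (rule sum.cong[OF refl], rule card_filter_sum[OF finVK])
  also have "\<dots> = (\<Sum>y\<in>V - K. \<Sum>x\<in>K. if E x y then 1 else 0)" by (rule sum.swap)
  also have "\<dots> = (\<Sum>y\<in>V - K. card {x \<in> K. E x y})"
    by (rule sum.cong[OF refl], rule card_filter_sum[OF finK, symmetric])
  also have "\<dots> \<le> (\<Sum>y\<in>V - K. R)" using up by (rule sum_mono)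
  also have "\<dots> = R * card (V - K)" by simp
  also have "card (V - K) = n - card K"
    using assms(3) sub[OF K] finK by (simp add: card_Diff_subset)
  finally have main: "card K * ((r - 1) * (l - 1)) \<le> R * (n - card K)" .
  have lK: "l \<le> card K" using assms(7) K by blast
  have Kn: "card K \<le> n" unfolding assms(3)[symmetric] by (rule card_mono[OF finV sub[OF K]])
  have "l * ((r - 1) * (l - 1)) \<le> R * (n - l)"
  proof -
    have "l * ((r - 1) * (l - 1)) \<le> card K * ((r - 1) * (l - 1))"
      using lK by (rule mult_le_mono1)
    also have "\<dots> \<le> R * (n - card K)" by (rule main)
    also have "\<dots> \<le> R * (n - l)"
      using lK by (intro mult_le_mono2 diff_le_mono2)
    finally show ?thesis .
  qed
  hence natin: "real (l * ((r - 1) * (l - 1))) \<le> real (R * (n - l))" by linarith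
  have ln: "l \<le> n" using lK Kn by simp
  have h: "real l * (real r - 1) * (real l - 1) \<le> real R * (real n - real l)"
  proof (cases "l = 0")
    case False
    have eq1: "real (l * ((r - 1) * (l - 1))) = real l * (real r - 1) * (real l - 1)"
      using False assms(5) by (simp add: of_nat_diff)
    have eq2: "real (R * (n - l)) = real R * (real n - real l)"
      using ln by (simp add: of_nat_diff)
    show ?thesis using natin eq1 eq2 by linarith
  qed simp
  show ?thesis
    by (rule final_ineq) (use assms(5) RR h in auto)
qed

end
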